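(* Let $f$ be a polynomial with integer coefficients of degree $r\ge3$ with positive leading coefficient, positive and strictly increasing on $[0,\infty)$. For each positive integer $N$ and real $x$ let \[ g_N(x)=\frac{f'(x)\left(1-\frac{f(x)}{f(N)}\right)}{\int_0^N f'(t)\left(1-\frac{f(t)}{f(N)}\right)dt}. \] Then for any fixed $\epsilon>0$, $\lim_{N\to\infty}N^{2-\epsilon}\sup_{x\in[0,N]}|g_N'(x)|=0$. *)

theory Defs
  imports "HOL-Analysis.Analysis" "HOL-Computational_Algebra.Polynomial"
begin

definition gN :: "real poly \<Rightarrow> nat \<Rightarrow> real \<Rightarrow> real" where
  "gN f N x =
     (poly (pderiv f) x * (1 - poly f x / poly f (real N))) /
     integral {0..real N} (\<lambda>t. poly (pderiv f) t * (1 - poly f t / poly f (real N)))"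

end

theory Submission
  imports Defs
begin

lemma poly_upper:
  fixes p :: "real poly"
  assumes "\<bar>x\<bar> \<le> N" "1 \<le> N"
  shows "\<bar>poly p x\<bar> \<le> (\<Sum>i\<le>degree p. \<bar>coeff p i\<bar>) * N ^ degree p"
proof -
  have "\<bar>poly p x\<bar> = \<bar>\<Sum>i\<le>degree p. coeff p i * x ^ i\<bar>" by (simp add: poly_altdef)
  also have "\<dots> \<le> (\<Sum>i\<le>degree p. \<bar>coeff p i * x ^ i\<bar>)" by (rule sum_abs)
  also have "\<dots> \<le> (\<Sum>i\<le>degree p. \<bar>coeff p i\<bar> * N ^ degree p)"
  proof (rule sum_mono)
    fix i assume i: "i \<in> {..degree p}"
    have "\<bar>x\<bar> ^ i \<le> N ^ i" by (rule power_mono) (use assms in auto)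
    also have "\<dots> \<le> N ^ degree p" using i assms by (intro power_increasing) auto
    finally show "\<bar>coeff p i * x ^ i\<bar> \<le> \<bar>coeff p i\<bar> * N ^ degree p"
      by (simp add: abs_mult power_abs mult_left_mono)
  qed
  finally show ?thesis by (simp add: sum_distrib_right)
qed

lemma poly_lower:
  fixes p :: "real poly"
  assumes d: "degree p = Suc m" and lc: "lead_coeff p > 0"
    and x1: "1 \<le> x" and x2: "2 * (\<Sum>i<Suc m. \<bar>coeff p i\<bar>) / lead_coeff p \<le> x"
  shows "poly p x \<ge> lead_coeff p / 2 * x ^ Suc m"
proof -
  define S where "S = (\<Sum>i<Suc m. \<bar>coeff p i\<bar>)"
  define c where "c = lead_coeff p"
  have c: "c = coeff p (Suc m)" using d by (simp add: c_def)
  have "poly p x = (\<Sum>i<Suc m. coeff p i * x ^ i) + c * x ^ Suc m"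
    unfolding poly_altdef d c by (simp add: lessThan_Suc_atMost[symmetric])
  moreover have "\<bar>\<Sum>i<Suc m. coeff p i * x ^ i\<bar> \<le> S * x ^ m"
  proof -
    have "\<bar>\<Sum>i<Suc m. coeff p i * x ^ i\<bar> \<le> (\<Sum>i<Suc m. \<bar>coeff p i * x ^ i\<bar>)" by (rule sum_abs)
    also have "\<dots> \<le> (\<Sum>i<Suc m. \<bar>coeff p i\<bar> * x ^ m)"
    proof (rule sum_mono)
      fix i assume i: "i \<in> {..<Suc m}"
      have "x ^ i \<le> x ^ m" using i x1 by (intro power_increasing) auto
      then show "\<bar>coeff p i * x ^ i\<bar> \<le> \<bar>coeff p i\<bar> * x ^ m"
        using x1 by (simp add: abs_mult mult_left_mono)
    qed
    finally show ?thesis unfolding S_def sum_distrib_right .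
  qed
  moreover have "S * x ^ m \<le> c / 2 * x ^ Suc m"
  proof -
    have "S \<le> c / 2 * x" using x2 lc unfolding S_def c_def by (simp add: field_simps)
    hence "S * x ^ m \<le> (c/2*x) * x ^ m" using x1 by (intro mult_right_mono) auto
    thus ?thesis by (simp add: algebra_simps)
  qed
  ultimately show ?thesis unfolding c_def by linarith
qed

lemma integral_gN:
  fixes F :: "real poly" and b :: real
  assumes "0 \<le> b" "poly F b \<noteq> 0"
  shows "integral {0..b} (\<lambda>t. poly (pderiv F) t * (1 - poly F t / poly F b))
         = (poly F b - poly F 0)^2 / (2 * poly F b)"
proof -
  define P where "P = poly F b"
  define G where "G = (\<lambda>t. poly F t - (poly F t)^2 / (2*P))"
  have "((\<lambda>t. poly (pderiv F) t * (1 - poly F t / P)) has_integral G b - G 0) {0..b}"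
  proof (rule fundamental_theorem_of_calculus)
    show "0 \<le> b" by fact
    fix x assume "x \<in> {0..b}"
    have "(G has_real_derivative (poly (pderiv F) x - 2 * poly F x * poly (pderiv F) x / (2*P))) (at x)"
      using assms unfolding G_def P_def by (auto intro!: derivative_eq_intros)
    moreover have "poly (pderiv F) x - 2 * poly F x * poly (pderiv F) x / (2*P)
        = poly (pderiv F) x * (1 - poly F x / P)"
      using assms by (simp add: P_def field_simps)
    ultimately show "(G has_vector_derivative poly (pderiv F) x * (1 - poly F x / P)) (at x within {0..b})"
      by (simp add: has_real_derivative_iff_has_vector_derivative[symmetric] has_field_derivative_at_within)
  qed
  hence "integral {0..b} (\<lambda>t. poly (pderiv F) t * (1 - poly F t / P)) = G b - G 0"
    by (rule integral_unique)
  also have "G b - G 0 = (P - poly F 0)^2 / (2 * P)"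
    using assms unfolding G_def P_def by (simp add: field_simps power2_eq_square)
  finally show ?thesis by (simp add: P_def)
qed

lemma deriv_gN:
  fixes F :: "real poly"
  assumes "poly F (real N) \<noteq> 0"
    "integral {0..real N} (\<lambda>t. poly (pderiv F) t * (1 - poly F t / poly F (real N))) \<noteq> 0"
  shows "deriv (gN F N) x = (poly (pderiv (pderiv F)) x * (1 - poly F x / poly F (real N))
           - (poly (pderiv F) x)^2 / poly F (real N)) /
        integral {0..real N} (\<lambda>t. poly (pderiv F) t * (1 - poly F t / poly F (real N)))"
proof -
  define P where "P = poly F (real N)"
  define I where "I = integral {0..real N} (\<lambda>t. poly (pderiv F) t * (1 - poly F t / P))"
  have g: "gN F N = (\<lambda>x. poly (pderiv F) x * (1 - poly F x / P) / I)"
    unfolding gN_def P_def I_def by auto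
  have "(gN F N has_real_derivative
     (poly (pderiv (pderiv F)) x * (1 - poly F x / P) + poly (pderiv F) x * (- (poly (pderiv F) x / P))) / I) (at x)"
    using assms unfolding g P_def I_def by (auto intro!: derivative_eq_intros)
  from DERIV_imp_deriv[OF this] show ?thesis
    unfolding P_def I_def by (simp add: power2_eq_square)
qed

lemma main_bound:
  fixes F :: "real poly"
  assumes d: "degree F = Suc (Suc k)" and lc: "lead_coeff F > 0"
    and pos: "\<forall>x::real. x \<ge> 0 \<longrightarrow> poly F x > 0"
    and mono: "strict_mono_on {0::real..} (poly F)"
  shows "\<exists>K. \<forall>\<^sub>F N in sequentially. \<forall>x\<in>{0..real N}. \<bar>deriv (gN F N) x\<bar> \<le> K / (real N)^2"
proof -
  define c where "c = lead_coeff F"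
  define D where "D = pderiv F"
  define D2 where "D2 = pderiv D"
  define S where "S = (\<Sum>i<Suc (Suc k). \<bar>coeff F i\<bar>)"
  define S' where "S' = (\<Sum>i\<le>degree F. \<bar>coeff F i\<bar>)"
  define A where "A = (\<Sum>i\<le>degree D2. \<bar>coeff D2 i\<bar>)"
  define B where "B = (\<Sum>i\<le>degree D. \<bar>coeff D i\<bar>)"
  define F0 where "F0 = poly F 0"
  have c: "c > 0" using lc by (simp add: c_def)
  have degD: "degree D = Suc k" using d by (simp add: D_def degree_pderiv)
  have degD2: "degree D2 = k" using degD by (simp add: D2_def degree_pderiv)
  have A0: "A \<ge> 0" unfolding A_def by (intro sum_nonneg) auto
  have S'0: "S' \<ge> 0" unfolding S'_def by (intro sum_nonneg) auto
  have F0: "F0 > 0" using pos by (simp add: F0_def)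
  define M0 where "M0 = max 1 (max (2 * S / c) (4 * F0 / c))"
  define K where "K = 32 * (S' * A + B^2) / c^2"
  have ev: "\<forall>\<^sub>F N in sequentially. M0 \<le> real N"
    using filterlim_real_sequentially by (simp add: filterlim_at_top)
  have "\<forall>\<^sub>F N in sequentially. \<forall>x\<in>{0..real N}. \<bar>deriv (gN F N) x\<bar> \<le> K / (real N)^2"
    using ev
  proof eventually_elim
    case (elim N)
    define n where "n = real N"
    have n1: "1 \<le> n" and n2: "2 * S / c \<le> n" and n3: "4 * F0 / c \<le> n"
      using elim by (auto simp: n_def M0_def)
    define P where "P = poly F n"
    define Q where "Q = P - F0"
    have Plow: "P \<ge> c / 2 * n ^ Suc (Suc k)"
      unfolding P_def c_def using poly_lower[OF d lc n1] n2 by (simp add: S_def c_def)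
    have Pup: "P \<le> S' * n ^ Suc (Suc k)"
      using poly_upper[of n n F] n1 pos by (simp add: P_def S'_def d)
    have nn: "n \<le> n ^ Suc (Suc k)" using power_increasing[of 1 "Suc (Suc k)" n] n1 by simp
    have "F0 \<le> c / 4 * n" using n3 c by (simp add: field_simps)
    also have "\<dots> \<le> c / 4 * n ^ Suc (Suc k)" using nn c by simp
    finally have "F0 \<le> c / 4 * n ^ Suc (Suc k)" .
    hence Qlow: "Q \<ge> c / 4 * n ^ Suc (Suc k)" using Plow by (simp add: Q_def)
    have npos: "n > 0" using n1 by simp
    have "c / 4 * n ^ Suc (Suc k) > 0" using c npos by simp
    hence Qpos: "Q > 0" using Qlow by linarith
    have Ppos: "P > 0" using pos n1 by (simp add: P_def)
    have I: "integral {0..n} (\<lambda>t. poly (pderiv F) t * (1 - poly F t / P)) = Q^2 / (2 * P)"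
      using integral_gN[of n F] n1 Ppos by (simp add: P_def Q_def F0_def)
    have Ipos: "Q^2 / (2 * P) > 0" using Qpos Ppos by simp
    define MM where "MM = n ^ (2 * k + 2)"
    have MM: "MM > 0" using npos by (simp add: MM_def)
    have Q2: "Q^2 \<ge> c^2 / 16 * MM * n^2"
    proof -
      have le: "(c / 4 * n ^ Suc (Suc k))^2 \<le> Q^2"
        using Qlow c npos by (intro power_mono) auto
      have e: "(n ^ Suc (Suc k))^2 = MM * n^2"
        unfolding MM_def power_mult[symmetric] power_add[symmetric]
        by (rule arg_cong[where f="(^) n"]) simp
      moreover have "(c / 4 * n ^ Suc (Suc k))^2 = c^2 / 16 * (n ^ Suc (Suc k))^2"
        by (simp add: power_mult_distrib power_divide)
      ultimately have "(c / 4 * n ^ Suc (Suc k))^2 = c^2 / 16 * MM * n^2" by simp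
      with le show ?thesis by simp
    qed
    show ?case
    proof
      fix x assume x: "x \<in> {0..real N}"
      hence x0: "0 \<le> x" and xn: "x \<le> n" by (auto simp: n_def)
      have Fx: "0 < poly F x" using pos x0 by simp
      have FxP: "poly F x \<le> P"
      proof (cases "x = n")
        case False
        hence "x < n" using xn by simp
        thus ?thesis using mono x0 npos unfolding P_def
          by (intro less_imp_le strict_mono_onD[OF mono]) auto
      qed (simp add: P_def)
      define t where "t = 1 - poly F x / P"
      have t0: "0 \<le> t" and t1: "t \<le> 1" using Fx FxP Ppos by (auto simp: t_def field_simps)
      have hA: "\<bar>poly D2 x\<bar> \<le> A * n ^ k"
        using poly_upper[of x n D2] x0 xn n1 by (simp add: A_def degD2)
      have hB: "\<bar>poly D x\<bar> \<le> B * n ^ Suc k"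
        using poly_upper[of x n D] x0 xn n1 by (simp add: B_def degD)
      have hB2: "(poly D x)^2 \<le> B^2 * MM"
      proof -
        have "(poly D x)^2 = \<bar>poly D x\<bar>^2" by simp
        also have "\<dots> \<le> (B * n ^ Suc k)^2" using hB by (intro power_mono) auto
        also have "\<dots> = B^2 * (n ^ Suc k)^2" by (simp add: power_mult_distrib)
        also have "(n ^ Suc k)^2 = MM" unfolding MM_def power_mult[symmetric]
          by (rule arg_cong[where f="(^) n"]) simp
        finally show ?thesis .
      qed
      have PA: "P * \<bar>poly D2 x\<bar> \<le> S' * A * MM"
      proof -
        have "P * \<bar>poly D2 x\<bar> \<le> (S' * n ^ Suc (Suc k)) * (A * n ^ k)"
          using Pup hA Ppos by (intro mult_mono) auto
        also have "\<dots> = S' * A * MM"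
          by (simp add: MM_def power_add[symmetric] algebra_simps mult_2_right)
        finally show ?thesis .
      qed
      have der: "deriv (gN F N) x = (poly D2 x * t - (poly D x)^2 / P) / (Q^2 / (2 * P))"
        using deriv_gN[of F N x] I Ppos Ipos Qpos by (simp add: D2_def D_def t_def P_def n_def)
      have "\<bar>deriv (gN F N) x\<bar> = \<bar>poly D2 x * t - (poly D x)^2 / P\<bar> * (2 * P) / Q^2"
      proof -
        have "deriv (gN F N) x = (poly D2 x * t - (poly D x)^2 / P) * ((2 * P) / Q^2)"
          unfolding der by simp
        moreover have "\<bar>(2 * P) / Q^2\<bar> = (2 * P) / Q^2" using Ppos by simp
        ultimately show ?thesis by (simp only: abs_mult) simp
      qed
      also have "\<dots> \<le> (\<bar>poly D2 x\<bar> + (poly D x)^2 / P) * (2 * P) / Q^2"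
      proof -
        have "\<bar>poly D2 x * t - (poly D x)^2 / P\<bar> \<le> \<bar>poly D2 x\<bar> * t + (poly D x)^2 / P"
          using t0 Ppos by (simp add: abs_mult abs_triangle_ineq4[THEN order_trans])
        also have "\<dots> \<le> \<bar>poly D2 x\<bar> + (poly D x)^2 / P"
          using t1 by (simp add: mult_left_le)
        finally show ?thesis using Ppos Qpos by (intro divide_right_mono mult_right_mono) auto
      qed
      also have "\<dots> = 2 * (P * \<bar>poly D2 x\<bar> + (poly D x)^2) / Q^2"
        using Ppos Qpos by (simp add: field_simps)
      also have "\<dots> \<le> 2 * (S' * A * MM + B^2 * MM) / (c^2 / 16 * MM * n^2)"
        using PA hB2 Q2 MM c npos Qpos A0 S'0
        by (intro frac_le) (auto intro!: add_nonneg_nonneg)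
      also have "\<dots> = K / n^2" using MM c npos by (simp add: K_def field_simps)
      finally show "\<bar>deriv (gN F N) x\<bar> \<le> K / (real N)^2" by (simp add: n_def)
    qed
  qed
  thus ?thesis by blast
qed


theorem lemma8:
  fixes f :: "int poly" and \<epsilon> :: real
  defines "F \<equiv> map_poly real_of_int f"
  assumes "degree f \<ge> 3"
    and "lead_coeff f > 0"
    and "\<forall>x::real. x \<ge> 0 \<longrightarrow> poly F x > 0"
    and "strict_mono_on {0::real..} (poly F)"
    and "\<epsilon> > 0"
  shows "(\<lambda>N::nat. real N powr (2 - \<epsilon>) *
            (SUP x\<in>{0..real N}. \<bar>deriv (gN F N) x\<bar>)) \<longlonglongrightarrow> 0"
proof -
  have degF: "degree F = degree f" unfolding F_def by (rule degree_map_poly) simp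
  have "lead_coeff F = coeff F (degree f)" using degF by simp
  also have "\<dots> = real_of_int (lead_coeff f)" by (simp add: F_def coeff_map_poly)
  finally have lcF: "lead_coeff F > 0" using assms(3) by simp
  obtain k where k: "degree F = Suc (Suc k)" using degF assms(2)
    by (metis Suc_le_D le_trans numeral_3_eq_3 le_Suc_eq)
  obtain K where K: "\<forall>\<^sub>F N in sequentially. \<forall>x\<in>{0..real N}. \<bar>deriv (gN F N) x\<bar> \<le> K / (real N)^2"
    using main_bound[OF k lcF assms(4,5)] by blast
  have lim: "(\<lambda>N::nat. K * real N powr (- \<epsilon>)) \<longlonglongrightarrow> 0"
    using tendsto_neg_powr[of "- \<epsilon>" real sequentially] assms(6) filterlim_real_sequentially
    by (auto intro: tendsto_mult_right_zero)
  have ev1: "\<forall>\<^sub>F N in sequentially. (1::nat) \<le> N" by (rule eventually_ge_at_top)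
  show ?thesis
  proof (rule tendsto_sandwich[OF _ _ tendsto_const lim])
    show "\<forall>\<^sub>F N in sequentially. 0 \<le> real N powr (2 - \<epsilon>) * (SUP x\<in>{0..real N}. \<bar>deriv (gN F N) x\<bar>)"
      using K ev1
    proof eventually_elim
      case (elim N)
      have "bdd_above ((\<lambda>x. \<bar>deriv (gN F N) x\<bar>) ` {0..real N})"
        using elim(1) by (intro bdd_aboveI2) auto
      hence "\<bar>deriv (gN F N) 0\<bar> \<le> (SUP x\<in>{0..real N}. \<bar>deriv (gN F N) x\<bar>)"
        by (intro cSUP_upper) auto
      hence "0 \<le> (SUP x\<in>{0..real N}. \<bar>deriv (gN F N) x\<bar>)" by linarith
      thus ?case by simp
    qed
    show "\<forall>\<^sub>F N in sequentially. real N powr (2 - \<epsilon>) * (SUP x\<in>{0..real N}. \<bar>deriv (gN F N) x\<bar>) \<le> K * real N powr (- \<epsilon>)"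
      using K ev1
    proof eventually_elim
      case (elim N)
      have n: "real N > 0" using elim(2) by simp
      have "(SUP x\<in>{0..real N}. \<bar>deriv (gN F N) x\<bar>) \<le> K / (real N)^2"
        using elim(1) by (intro cSUP_least) auto
      hence "real N powr (2 - \<epsilon>) * (SUP x\<in>{0..real N}. \<bar>deriv (gN F N) x\<bar>)
          \<le> real N powr (2 - \<epsilon>) * (K / (real N)^2)"
        by (intro mult_left_mono) auto
      also have "\<dots> = K * real N powr (- \<epsilon>)"
        using n by (simp add: powr_diff powr_minus_divide field_simps)
      finally show ?case .
    qed
  qed
qed

end
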